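(* Let $\varepsilon\in(0,1)$ and let $\mu=\mu(n)$ be sub-exponential in $n$ (i.e. $\mu=e^{o(n)}$). Let $P_0$ be a population of $\mu$ independent uniformly random points of $\{0,1\}^n$ and $Z_0:=\max\{0,\tau^{n-f_0}-g(P_0)\}$. Then for $n$ sufficiently large, \[E[Z_0]\ge\tfrac12\,\tau^{n-f_0}.\]
   Context: $f$ is OneMax, $f(x)=\sum_i x_i$. Potential: $\tau=\frac{4e}{\varepsilon}$, $\alpha=1-\frac1\tau\ln\big(1+\frac1\tau\big)$, $f_0=\lceil\alpha n\rceil$, $g(x)=\tau^{f(x)-f_0}$ if $f(x)\ge f_0$ and $g(x)=0$ otherwise; for a population (multiset) $P$, $g(P)=\sum_{x\in P}g(x)$. *)

theory Defs
  imports "HOL-Probability.Probability" "HOL-Library.Landau_Symbols"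
begin

definition bitstrings :: "nat \<Rightarrow> bool list set" where
  "bitstrings n = {xs. length xs = n}"

definition onemax :: "bool list \<Rightarrow> nat" where
  "onemax xs = length (filter id xs)"

definition tau :: "real \<Rightarrow> real" where
  "tau eps = 4 * exp 1 / eps"

definition alpha :: "real \<Rightarrow> real" where
  "alpha eps = 1 - (1 / tau eps) * ln (1 + 1 / tau eps)"

definition f0 :: "real \<Rightarrow> nat \<Rightarrow> int" where
  "f0 eps n = \<lceil>alpha eps * real n\<rceil>"

definition gpot :: "real \<Rightarrow> nat \<Rightarrow> bool list \<Rightarrow> real" where
  "gpot eps n x = (if int (onemax x) \<ge> f0 eps n
                   then tau eps powr (real (onemax x) - real_of_int (f0 eps n)) else 0)"

text \<open>Potential of a population (a multiset, represented as a list).\<close>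
definition gpop :: "real \<Rightarrow> nat \<Rightarrow> bool list list \<Rightarrow> real" where
  "gpop eps n P = (\<Sum>x\<leftarrow>P. gpot eps n x)"

text \<open>Population of m independent uniform points of {0,1}^n:
  uniform distribution on lists of length m of bit strings of length n.\<close>
definition init_pop :: "nat \<Rightarrow> nat \<Rightarrow> bool list list pmf" where
  "init_pop n m = pmf_of_set {P. length P = m \<and> set P \<subseteq> bitstrings n}"

definition Z0 :: "real \<Rightarrow> nat \<Rightarrow> bool list list \<Rightarrow> real" where
  "Z0 eps n P = max 0 (tau eps powr (real n - real_of_int (f0 eps n)) - gpop eps n P)"

end

theory Submission
  imports Defs
begin

lemma bits_Suc: "bitstrings (Suc n) = Cons True ` bitstrings n \<union> Cons False ` bitstrings n"
  unfolding bitstrings_def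
  by (auto simp: length_Suc_conv image_iff)

lemma finite_bits: "finite (bitstrings n)"
proof (induction n)
  case 0 then show ?case by (simp add: bitstrings_def)
next
  case (Suc n) then show ?case by (simp add: bits_Suc)
qed

lemma sum_bits: "(\<Sum>x\<in>bitstrings n. (t::real) ^ onemax x) = (1 + t) ^ n"
proof (induction n)
  case 0
  have "bitstrings 0 = {[]}" by (auto simp: bitstrings_def)
  then show ?case by (simp add: onemax_def)
next
  case (Suc n)
  have d: "Cons True ` bitstrings n \<inter> Cons False ` bitstrings n = {}" by auto
  have "(\<Sum>x\<in>bitstrings (Suc n). t ^ onemax x)
      = (\<Sum>x\<in>Cons True ` bitstrings n. t ^ onemax x) + (\<Sum>x\<in>Cons False ` bitstrings n. t ^ onemax x)"
    unfolding bits_Suc by (rule sum.union_disjoint) (auto simp: finite_bits)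
  also have "\<dots> = t * (\<Sum>x\<in>bitstrings n. t ^ onemax x) + (\<Sum>x\<in>bitstrings n. t ^ onemax x)"
    by (simp add: sum.reindex onemax_def sum_distrib_left)
  finally show ?case using Suc by (simp add: algebra_simps)
qed

lemma card_bits: "card (bitstrings n) = 2 ^ n"
proof -
  have "real (card (bitstrings n)) = (\<Sum>x\<in>bitstrings n. (1::real) ^ onemax x)" by simp
  also have "\<dots> = 2 ^ n" by (subst sum_bits) simp
  finally have "real (card (bitstrings n)) = real (2 ^ n)" by simp
  then show ?thesis by (rule of_nat_eq_iff[THEN iffD1])
qed

lemma sum_lists:
  fixes h :: "'a \<Rightarrow> real"
  assumes "finite A"
  shows "real (card A) * (\<Sum>P\<in>{xs. set xs \<subseteq> A \<and> length xs = m}. sum_list (map h P))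
         = real m * real (card A) ^ m * sum h A"
proof (induction m)
  case 0 then show ?case by simp
next
  case (Suc m)
  let ?S = "{xs. set xs \<subseteq> A \<and> length xs = m}"
  have fS: "finite ?S" using finite_lists_length_eq[OF assms] .
  have "(\<Sum>P\<in>{xs. set xs \<subseteq> A \<and> length xs = Suc m}. sum_list (map h P))
      = (\<Sum>p\<in>?S \<times> A. sum_list (map h ((\<lambda>(xs, n). n#xs) p)))"
    unfolding lists_length_Suc_eq
    by (rule sum.reindex[unfolded comp_def]) (auto simp: inj_on_def)
  also have "\<dots> = (\<Sum>xs\<in>?S. \<Sum>a\<in>A. h a + sum_list (map h xs))"
    by (simp add: sum.cartesian_product split_def)
  also have "\<dots> = (\<Sum>xs\<in>?S. sum h A + real (card A) * sum_list (map h xs))"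
    by (simp add: sum.distrib)
  also have "\<dots> = real (card A) ^ m * sum h A + real (card A) * (\<Sum>xs\<in>?S. sum_list (map h xs))"
    by (simp add: sum.distrib sum_distrib_left card_lists_length_eq[OF assms])
  finally have e: "(\<Sum>P\<in>{xs. set xs \<subseteq> A \<and> length xs = Suc m}. sum_list (map h P)) = \<dots>" .
  show ?case unfolding e using Suc by (simp add: algebra_simps)
qed


lemma gpot_le:
  assumes "1 < tau eps"
  shows "gpot eps n x \<le> tau eps powr (- real_of_int (f0 eps n)) * tau eps ^ onemax x"
proof -
  have pos: "0 < tau eps" using assms by simp
  have "tau eps powr (real (onemax x) - real_of_int (f0 eps n))
      = tau eps powr (- real_of_int (f0 eps n)) * tau eps ^ onemax x"
    using pos by (simp add: powr_add[symmetric] powr_realpow[symmetric])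
  then show ?thesis using pos by (simp add: gpot_def)
qed

lemma eventually_small:
  fixes mu :: "nat \<Rightarrow> nat" and r :: real
  assumes "0 < r" "r < 1"
    and "(\<lambda>n. ln (real (mu n))) \<in> o(\<lambda>n. real n)"
  shows "\<forall>\<^sub>F n in sequentially. real (mu n) * r ^ n \<le> 1/2"
proof -
  define d where "d = - ln r / 2"
  have d: "0 < d" using assms by (simp add: d_def)
  have e1: "\<forall>\<^sub>F n in sequentially. norm (ln (real (mu n))) \<le> d * norm (real n)"
    using landau_o.smallD[OF assms(3) d] .
  have e2: "\<forall>\<^sub>F n in sequentially. n \<ge> nat \<lceil>ln 2 / d\<rceil>"
    by (rule eventually_ge_at_top)
  show ?thesis using e1 e2
  proof eventually_elim
    case (elim n)
    have nd: "ln 2 \<le> d * real n"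
    proof -
      have "ln 2 / d \<le> real n" using elim(2)
        by (meson ceiling_le_iff le_nat_iff of_int_of_nat_eq real_nat_ceiling_ge order_trans of_nat_le_iff)
      then show ?thesis using d by (simp add: divide_le_eq mult.commute)
    qed
    show ?case
    proof (cases "mu n = 0")
      case True then show ?thesis by simp
    next
      case False
      then have m: "real (mu n) = exp (ln (real (mu n)))" by simp
      have "ln (real (mu n)) \<le> d * real n" using elim(1) by simp
      have rn: "r ^ n = exp (real n * ln r)" using assms(1)
        by (simp add: exp_of_nat_mult exp_ln)
      have "real (mu n) * r ^ n = exp (ln (real (mu n)) + real n * ln r)"
        by (subst m) (simp add: rn exp_add)
      also have "\<dots> \<le> exp (- ln 2)"
        using \<open>ln (real (mu n)) \<le> d * real n\<close> nd by (simp add: d_def algebra_simps)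
      also have "\<dots> = 1/2" by (simp add: exp_minus)
      finally show ?thesis .
    qed
  qed
qed


theorem lemma4:
  fixes eps :: real and mu :: "nat \<Rightarrow> nat"
  assumes "0 < eps" "eps < 1"
    and "(\<lambda>n. ln (real (mu n))) \<in> o(\<lambda>n. real n)"
  shows "\<forall>\<^sub>F n in sequentially.
           measure_pmf.expectation (init_pop n (mu n)) (Z0 eps n)
             \<ge> 1/2 * tau eps powr (real n - real_of_int (f0 eps n))"
proof -
  define t where "t = tau eps"
  have t1: "1 < t"
  proof -
    have "4 * exp 1 / eps > 4 * exp 1 / 1" using assms(1,2)
      by (intro divide_strict_left_mono) auto
    moreover have "4 * exp (1::real) \<ge> 4" by simp
    ultimately show ?thesis unfolding t_def tau_def by linarith
  qed
  define r where "r = (1 + t) / (2 * t)"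
  have r0: "0 < r" "r < 1" using t1 by (auto simp: r_def field_simps)
  show ?thesis using eventually_small[OF r0 assms(3)]
  proof eventually_elim
    case (elim n)
    define m where "m = mu n"
    define B where "B = bitstrings n"
    define c where "c = t powr (- real_of_int (f0 eps n))"
    define T where "T = t powr (real n - real_of_int (f0 eps n))"
    have c0: "0 < c" using t1 by (simp add: c_def)
    have Tc: "T = c * t ^ n" using t1
      by (simp add: T_def c_def powr_add[symmetric] powr_realpow[symmetric])
    define S where "S = {xs. set xs \<subseteq> B \<and> length xs = m}"
    have fB: "finite B" by (simp add: B_def finite_bits)
    have cB: "card B = 2 ^ n" by (simp add: B_def card_bits)
    have fS: "finite S" using finite_lists_length_eq[OF fB] by (simp add: S_def)
    have cS: "card S = card B ^ m" using card_lists_length_eq[OF fB] by (simp add: S_def)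
    have cSpos: "0 < card S" using cS cB by simp
    have Seq: "{P. length P = m \<and> set P \<subseteq> bitstrings n} = S" by (auto simp: S_def B_def)
    have S_ne: "S \<noteq> {}" using cSpos by auto
    have E: "measure_pmf.expectation (init_pop n (mu n)) (Z0 eps n) = (\<Sum>P\<in>S. Z0 eps n P) / card S"
      unfolding init_pop_def m_def[symmetric] Seq using integral_pmf_of_set[OF S_ne fS] .
    define h where "h x = t ^ onemax x" for x
    have Zge: "Z0 eps n P \<ge> T - c * sum_list (map h P)" for P
    proof -
      have "gpop eps n P \<le> c * sum_list (map h P)"
        unfolding gpop_def sum_list_const_mult[symmetric]
        by (rule sum_list_mono) (use gpot_le[of eps n] t1 in \<open>simp add: t_def c_def h_def\<close>)
      then show ?thesis by (simp add: Z0_def T_def t_def)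
    qed
    have sumZ: "(\<Sum>P\<in>S. Z0 eps n P) \<ge> (\<Sum>P\<in>S. T - c * sum_list (map h P))"
      by (rule sum_mono) (rule Zge)
    have sh: "sum h B = (1 + t) ^ n" by (simp add: h_def B_def sum_bits)
    have L: "real (card B) * (\<Sum>P\<in>S. sum_list (map h P)) = real m * real (card B) ^ m * (1 + t) ^ n"
      using sum_lists[OF fB, of h m] by (simp add: S_def sh)
    define K where "K = real (card S)"
    define X where "X = (1 + t) ^ n"
    have K0: "0 < K" using cSpos by (simp add: K_def)
    have KB: "K = real (card B) ^ m" using cS by (simp add: K_def)
    have cBpos: "0 < real (card B)" using cB by simp
    have a: "(\<Sum>P\<in>S. sum_list (map h P)) = real m * K * X / real (card B)"
      using L cBpos unfolding KB X_def by (simp add: eq_divide_eq mult.commute)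
    have "(\<Sum>P\<in>S. T - c * sum_list (map h P)) = K * T - c * (\<Sum>P\<in>S. sum_list (map h P))"
      by (simp add: sum_subtractf sum_distrib_left K_def)
    also have "\<dots> = K * (T - c * real m * (X / real (card B)))"
      unfolding a by (simp add: algebra_simps)
    finally have s2: "(\<Sum>P\<in>S. T - c * sum_list (map h P)) = K * (T - c * real m * (X / real (card B)))" .
    have XB: "X / real (card B) = ((1 + t) / 2) ^ n"
      by (simp add: X_def cB power_divide)
    have "(\<Sum>P\<in>S. Z0 eps n P) / K \<ge> T - c * real m * ((1 + t) / 2) ^ n"
      using sumZ K0 unfolding s2 XB by (simp add: le_divide_eq mult.commute)
    then have E2: "measure_pmf.expectation (init_pop n (mu n)) (Z0 eps n) \<ge> T - c * real m * ((1 + t) / 2) ^ n"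
      using E by (simp add: K_def)
    have "(1 + t) / 2 = r * t" using t1 by (simp add: r_def)
    then have "((1 + t) / 2) ^ n = r ^ n * t ^ n"
      by (simp add: power_mult_distrib)
    then have "c * real m * ((1 + t) / 2) ^ n = (real m * r ^ n) * (c * t ^ n)" by simp
    also have "\<dots> \<le> 1/2 * (c * t ^ n)"
      using elim c0 t1 by (intro mult_right_mono) (auto simp: m_def)
    finally have "c * real m * ((1 + t) / 2) ^ n \<le> 1/2 * T" using Tc by simp
    then show ?case using E2 by (simp add: T_def t_def)
  qed
qed

end
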